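(* Let $D$ be a rooted hyperbolic digraph with constant out-degree and bounded in-degree. If $g$ is a self-embedding of $D$ that is not elliptic and $v\in V(D)$ satisfies $d(v,g(v))<\infty$, then the map $\sigma\colon\mathbb{N}\to V(D)$, $i\mapsto g^i(v)$, is a quasi-isometric embedding, i.e. there are $\gamma\ge1$ and $c\ge0$ such that $\gamma^{-1}(j-i)-c\le d(g^i(v),g^j(v))\le\gamma(j-i)+c$ for all $i\le j$ in $\mathbb{N}$.
   Context: Digraph notions: a directed path $x_0\ldots x_n$ has edges $x_ix_{i+1}$; $d(x,y)$ is the length of a shortest directed $x$-$y$ path ($\infty$ if none), called an $x$-$y$ geodesic. $D$ is rooted if some vertex $o$ satisfies $d(o,v)<\infty$ for all $v$. $\mathcal{B}^+_k(x)=\{y:d(x,y)\le k\}$, $\mathcal{B}^-_k(x)=\{y:d(y,x)\le k\}$, extended to sets by unions. A geodesic triangle consists of three vertices and for each pair a geodesic between them (in one direction); it is $\delta$-thin if whenever $P,Q,R$ are its sides with the start of $P$ being the start or end of $Q$ and the end of $P$ being the start or end of $R$, $P\subseteq\mathcal{B}^+_\delta(Q)\cup\mathcal{B}^-_\delta(R)$; $D$ is hyperbolic if for some $\delta\ge0$ all geodesic triangles are $\delta$-thin. A self-embedding is an injective map $g:V(D)\to V(D)$ with $xy\in E(D)\iff g(x)g(y)\in E(D)$. It is elliptic if $g(F)=F$ for some nonempty finite vertex set $F$. Here $\mathbb{N}$ is regarded as the directed ray $0\to1\to2\to\cdots$. *)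

theory Defs
  imports Main "HOL-Library.Extended_Nat"
begin

definition dist :: "('a \<times> 'a) set \<Rightarrow> 'a \<Rightarrow> 'a \<Rightarrow> enat" where
  "dist E x y = (INF n \<in> {n. (x, y) \<in> E ^^ n}. enat n)"

definition is_dpath :: "'a set \<Rightarrow> ('a \<times> 'a) set \<Rightarrow> 'a list \<Rightarrow> bool" where
  "is_dpath V E xs \<longleftrightarrow> xs \<noteq> [] \<and> set xs \<subseteq> V \<and>
     (\<forall>i. Suc i < length xs \<longrightarrow> (xs ! i, xs ! Suc i) \<in> E)"

definition is_geodesic :: "'a set \<Rightarrow> ('a \<times> 'a) set \<Rightarrow> 'a list \<Rightarrow> bool" where
  "is_geodesic V E xs \<longleftrightarrow> is_dpath V E xs \<and>
     enat (length xs - 1) = dist E (hd xs) (last xs)"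

definition out_ball :: "('a \<times> 'a) set \<Rightarrow> nat \<Rightarrow> 'a set \<Rightarrow> 'a set" where
  "out_ball E k S = {y. \<exists>s\<in>S. dist E s y \<le> enat k}"

definition in_ball :: "('a \<times> 'a) set \<Rightarrow> nat \<Rightarrow> 'a set \<Rightarrow> 'a set" where
  "in_ball E k S = {y. \<exists>s\<in>S. dist E y s \<le> enat k}"

definition geodesic_triangle :: "'a set \<Rightarrow> ('a \<times> 'a) set \<Rightarrow> 'a \<Rightarrow> 'a \<Rightarrow> 'a \<Rightarrow>
     'a list \<Rightarrow> 'a list \<Rightarrow> 'a list \<Rightarrow> bool" where
  "geodesic_triangle V E x y z P Q R \<longleftrightarrow>
     is_geodesic V E P \<and> is_geodesic V E Q \<and> is_geodesic V E R \<and>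
     {hd P, last P} = {x, y} \<and> {hd Q, last Q} = {y, z} \<and> {hd R, last R} = {x, z}"

definition thin_triangle :: "('a \<times> 'a) set \<Rightarrow> nat \<Rightarrow> 'a list \<Rightarrow> 'a list \<Rightarrow> 'a list \<Rightarrow> bool" where
  "thin_triangle E \<delta> A B C \<longleftrightarrow>
     (\<forall>(P, Q, R) \<in> {(A, B, C), (A, C, B), (B, A, C), (B, C, A), (C, A, B), (C, B, A)}.
        (hd P = hd Q \<or> hd P = last Q) \<and> (last P = hd R \<or> last P = last R) \<longrightarrow>
        set P \<subseteq> out_ball E \<delta> (set Q) \<union> in_ball E \<delta> (set R))"

definition hyperbolic_digraph :: "'a set \<Rightarrow> ('a \<times> 'a) set \<Rightarrow> bool" where
  "hyperbolic_digraph V E \<longleftrightarrow> (\<exists>\<delta>::nat. \<forall>x y z P Q R.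
     geodesic_triangle V E x y z P Q R \<longrightarrow> thin_triangle E \<delta> P Q R)"

definition rooted :: "'a set \<Rightarrow> ('a \<times> 'a) set \<Rightarrow> bool" where
  "rooted V E \<longleftrightarrow> (\<exists>r\<in>V. \<forall>v\<in>V. dist E r v < \<infinity>)"

definition constant_out_degree :: "'a set \<Rightarrow> ('a \<times> 'a) set \<Rightarrow> bool" where
  "constant_out_degree V E \<longleftrightarrow> (\<exists>k::nat. \<forall>v\<in>V.
     finite {w. (v, w) \<in> E} \<and> card {w. (v, w) \<in> E} = k)"

definition bounded_in_degree :: "'a set \<Rightarrow> ('a \<times> 'a) set \<Rightarrow> bool" where
  "bounded_in_degree V E \<longleftrightarrow> (\<exists>m::nat. \<forall>v\<in>V.
     finite {u. (u, v) \<in> E} \<and> card {u. (u, v) \<in> E} \<le> m)"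

definition self_embedding :: "'a set \<Rightarrow> ('a \<times> 'a) set \<Rightarrow> ('a \<Rightarrow> 'a) \<Rightarrow> bool" where
  "self_embedding V E g \<longleftrightarrow> g ` V \<subseteq> V \<and> inj_on g V \<and>
     (\<forall>x\<in>V. \<forall>y\<in>V. (x, y) \<in> E \<longleftrightarrow> (g x, g y) \<in> E)"

definition elliptic :: "'a set \<Rightarrow> ('a \<Rightarrow> 'a) \<Rightarrow> bool" where
  "elliptic V g \<longleftrightarrow> (\<exists>F. F \<noteq> {} \<and> finite F \<and> F \<subseteq> V \<and> g ` F = F)"

end

theory Submission imports Defs begin

lemma enat_le_E: "(a::enat) \<le> enat n \<Longrightarrow> \<exists>m. a = enat m \<and> m \<le> n"
  by (cases a) auto

lemma enat_le_obtain:
  assumes "(a::enat) \<le> enat n"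
  obtains m where "a = enat m" "m \<le> n"
  using assms by (cases a) auto

lemma enat_fin_obtain:
  assumes "(a::enat) \<noteq> \<infinity>"
  obtains m where "a = enat m"
  using assms by (cases a) auto

lemma dist_le_enat: "(x,y) \<in> E^^n \<Longrightarrow> dist E x y \<le> enat n"
  unfolding dist_def by (rule INF_lower2[of n]) auto

lemma dist_enatD: "dist E x y = enat n \<Longrightarrow> (x,y) \<in> E^^n"
proof -
  assume a: "dist E x y = enat n"
  let ?S = "{n. (x, y) \<in> E ^^ n}"
  have d: "dist E x y = Inf (enat ` ?S)" unfolding dist_def by (rule refl)
  have ne: "enat ` ?S \<noteq> {}"
  proof
    assume e: "enat ` ?S = {}"
    have "dist E x y = Inf {}" using d e by (simp only:)
    also have "\<dots> = \<infinity>" by (simp add: Inf_enat_def)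
    finally show False using a by (simp only: enat.distinct)
  qed
  have "Inf (enat ` ?S) = (LEAST z. z \<in> enat ` ?S)"
    unfolding Inf_enat_def by (rule if_not_P[OF ne])
  moreover have "(LEAST z. z \<in> enat ` ?S) \<in> enat ` ?S"
  proof -
    from ne obtain z where "z \<in> enat ` ?S" by blast
    then show ?thesis by (rule LeastI)
  qed
  ultimately have "enat n \<in> enat ` ?S" using a d by (simp only:)
  then obtain k where "k \<in> ?S" "enat n = enat k" by (rule imageE)
  then show ?thesis by simp
qed

lemma dist_finD: "dist E x y \<noteq> \<infinity> \<Longrightarrow> \<exists>n. dist E x y = enat n"
  by (cases "dist E x y") auto

lemma dist_min: "(x,y) \<in> E^^m \<Longrightarrow> dist E x y = enat n \<Longrightarrow> n \<le> m"
proof -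
  assume a: "(x,y) \<in> E^^m" and b: "dist E x y = enat n"
  have "dist E x y \<le> enat m" by (rule dist_le_enat) (fact a)
  then show ?thesis using b by simp
qed

lemma dist_tri: "dist E x z \<le> dist E x y + dist E y z"
proof (cases "dist E x y = \<infinity> \<or> dist E y z = \<infinity>")
  case True
  then have "dist E x y + dist E y z = \<infinity>" by (elim disjE) simp_all
  then show ?thesis by simp
next
  case False
  then have f1: "dist E x y \<noteq> \<infinity>" and f2: "dist E y z \<noteq> \<infinity>" by simp_all
  obtain n1 where 1: "dist E x y = enat n1" by (rule enat_fin_obtain[OF f1])
  obtain n2 where 2: "dist E y z = enat n2" by (rule enat_fin_obtain[OF f2])
  have "(x,z) \<in> E^^(n1+n2)" using dist_enatD[OF 1] dist_enatD[OF 2] by (rule relpow_trans)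
  then have "dist E x z \<le> enat (n1+n2)" by (rule dist_le_enat)
  then show ?thesis by (simp only: 1 2 plus_enat_simps(1))
qed

lemma dist_refl: "dist E x x = 0"
proof -
  have "dist E x x \<le> enat 0" by (rule dist_le_enat) simp
  then show ?thesis by (simp add: zero_enat_def[symmetric])
qed

lemma dist_edge: "(x,y) \<in> E \<Longrightarrow> dist E x y \<le> 1"
proof -
  assume "(x,y) \<in> E"
  then have "(x,y) \<in> E^^1" by simp
  then show ?thesis using dist_le_enat[where x=x and y=y and E=E and n=1] by (simp add: one_enat_def)
qed

lemma dist_le_iff: "dist E x y \<le> enat n \<longleftrightarrow> (\<exists>m\<le>n. (x,y) \<in> E^^m)"
proof
  assume "dist E x y \<le> enat n"
  then obtain m where m: "dist E x y = enat m" "m \<le> n"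
    by (rule enat_le_obtain)
  then show "\<exists>m\<le>n. (x,y) \<in> E^^m" using dist_enatD[OF m(1)] by blast
next
  assume "\<exists>m\<le>n. (x,y) \<in> E^^m"
  then obtain m where "m \<le> n" "(x,y) \<in> E^^m" by blast
  have "dist E x y \<le> enat m" by (rule dist_le_enat) fact
  also have "enat m \<le> enat n" using \<open>m \<le> n\<close> by simp
  finally show "dist E x y \<le> enat n" .
qed

lemma relpow_in_V: "E \<subseteq> V \<times> V \<Longrightarrow> (x,y) \<in> E^^n \<Longrightarrow> x \<in> V \<Longrightarrow> y \<in> V"
proof (induction n arbitrary: y)
  case 0 then show ?case by simp
next
  case (Suc n)
  from Suc.prems(2) obtain z where "(x,z) \<in> E^^n" "(z,y) \<in> E" by auto
  then show ?case using Suc by auto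
qed

lemma dist_fin_in_V: "E \<subseteq> V \<times> V \<Longrightarrow> dist E x y \<noteq> \<infinity> \<Longrightarrow> x \<in> V \<Longrightarrow> y \<in> V"
proof -
  assume a: "E \<subseteq> V \<times> V" "dist E x y \<noteq> \<infinity>" "x \<in> V"
  obtain n where "dist E x y = enat n" by (rule enat_fin_obtain[OF a(2)])
  then have "(x,y) \<in> E^^n" by (rule dist_enatD)
  then show "y \<in> V" by (rule relpow_in_V[OF a(1) _ a(3)])
qed


lemma dpath_relpow:
  assumes "is_dpath V E xs" "i \<le> k" "k < length xs"
  shows "(xs!i, xs!k) \<in> E^^(k-i)"
proof -
  have edge: "\<And>j. Suc j < length xs \<Longrightarrow> (xs ! j, xs ! Suc j) \<in> E"
    using assms(1) unfolding is_dpath_def by blast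
  have "\<forall>k. i + d = k \<longrightarrow> k < length xs \<longrightarrow> (xs!i, xs!k) \<in> E^^d" for d
  proof (induction d)
    case 0 then show ?case by simp
  next
    case (Suc d)
    show ?case
    proof (intro allI impI)
      fix k assume k: "i + Suc d = k" "k < length xs"
      have "(xs!i, xs!(i+d)) \<in> E^^d" using Suc.IH k by simp
      moreover have "(xs!(i+d), xs!Suc (i+d)) \<in> E" using edge[of "i+d"] k by simp
      ultimately have "(xs!i, xs!Suc (i+d)) \<in> E^^Suc d" by (rule relpow_Suc_I)
      then show "(xs!i, xs!k) \<in> E^^Suc d" using k by simp
    qed
  qed
  from this[of "k-i"] show ?thesis using assms(2,3) by simp
qed

lemma geo_pos:
  assumes g: "is_geodesic V E xs" and i: "i < length xs"
  shows "dist E (hd xs) (xs!i) = enat i \<and> dist E (xs!i) (last xs) = enat (length xs - 1 - i)"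
proof -
  have p: "is_dpath V E xs" and L: "enat (length xs - 1) = dist E (hd xs) (last xs)"
    using g unfolding is_geodesic_def by auto
  have ne: "xs \<noteq> []" using p unfolding is_dpath_def by simp
  have h: "hd xs = xs!0" using ne by (simp add: hd_conv_nth)
  have l: "last xs = xs!(length xs - 1)" using ne by (simp add: last_conv_nth)
  have r1: "(xs!0, xs!i) \<in> E^^(i-0)" by (rule dpath_relpow[OF p]) (use i in auto)
  have a: "dist E (hd xs) (xs!i) \<le> enat i"
    using dist_le_enat[OF r1] h by simp
  have r2: "(xs!i, xs!(length xs - 1)) \<in> E^^(length xs - 1 - i)" by (rule dpath_relpow[OF p]) (use i in auto)
  have b: "dist E (xs!i) (last xs) \<le> enat (length xs - 1 - i)"
    using dist_le_enat[OF r2] l by simp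
  obtain a' where a': "dist E (hd xs) (xs!i) = enat a'" "a' \<le> i" by (rule enat_le_obtain[OF a])
  obtain b' where b': "dist E (xs!i) (last xs) = enat b'" "b' \<le> length xs - 1 - i" by (rule enat_le_obtain[OF b])
  have "dist E (hd xs) (last xs) \<le> dist E (hd xs) (xs!i) + dist E (xs!i) (last xs)" by (rule dist_tri)
  then have "enat (length xs - 1) \<le> enat a' + enat b'" by (simp only: L a'(1) b'(1))
  then have "length xs - 1 \<le> a' + b'" by simp
  then have "a' = i" "b' = length xs - 1 - i" using a'(2) b'(2) i by linarith+
  then show ?thesis using a'(1) b'(1) by simp
qed

lemma geo_nth_dist:
  assumes g: "is_geodesic V E xs" and i: "i \<le> k" "k < length xs"
  shows "dist E (xs!i) (xs!k) = enat (k - i)"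
proof -
  have p: "is_dpath V E xs" using g unfolding is_geodesic_def by auto
  have a: "dist E (xs!i) (xs!k) \<le> enat (k - i)"
    by (rule dist_le_enat[OF dpath_relpow[OF p i]])
  have t1: "dist E (hd xs) (xs!k) \<le> dist E (hd xs) (xs!i) + dist E (xs!i) (xs!k)" by (rule dist_tri)
  have "dist E (hd xs) (xs!k) = enat k" "dist E (hd xs) (xs!i) = enat i"
    using geo_pos[OF g] i by auto
  then have "enat k \<le> enat i + dist E (xs!i) (xs!k)" using t1 by simp
  then show ?thesis using a i
    by (cases "dist E (xs!i) (xs!k)") auto
qed

lemma geo_exists:
  assumes EV: "E \<subseteq> V \<times> V" and x: "x \<in> V" and d: "dist E x y = enat n"
  shows "\<exists>xs. is_geodesic V E xs \<and> hd xs = x \<and> last xs = y \<and> length xs = Suc n"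
proof -
  have "(x,y) \<in> E^^n" using d by (rule dist_enatD)
  then obtain f where f: "f 0 = x" "f n = y" "\<forall>i<n. (f i, f (Suc i)) \<in> E"
    using relpow_fun_conv by metis
  let ?xs = "map f [0..<Suc n]"
  have fV: "f i \<in> V" if "i \<le> n" for i
    using that
  proof (induction i)
    case 0 then show ?case using f x by simp
  next
    case (Suc i)
    then have "f i \<in> V" "(f i, f (Suc i)) \<in> E" using f by auto
    then show ?case using EV by blast
  qed
  have dp: "is_dpath V E ?xs"
    unfolding is_dpath_def
  proof (intro conjI allI impI)
    show "?xs \<noteq> []" by simp
    show "set ?xs \<subseteq> V" using fV by auto
    fix i assume "Suc i < length ?xs"
    then have "i < n" by simp
    then show "(?xs ! i, ?xs ! Suc i) \<in> E" using f(3)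
      by (simp add: nth_append del: upt_Suc)
  qed
  have hd: "hd ?xs = x" using f by (simp add: hd_map del: upt_Suc)
  have lst: "last ?xs = y" using f by (simp add: last_map del: upt_Suc)
  have "is_geodesic V E ?xs" unfolding is_geodesic_def using dp hd lst d by simp
  then show ?thesis using hd lst by (intro exI[of _ ?xs]) simp
qed

lemma set_nth_ex: "z \<in> set xs \<Longrightarrow> \<exists>i<length xs. xs!i = z"
  by (simp add: in_set_conv_nth)


lemma dist_tri_nat: "dist E x y \<le> enat a \<Longrightarrow> dist E y z \<le> enat b \<Longrightarrow> dist E x z \<le> enat (a+b)"
proof -
  assume 1: "dist E x y \<le> enat a" and 2: "dist E y z \<le> enat b"
  have "dist E x z \<le> dist E x y + dist E y z" by (rule dist_tri)
  also have "\<dots> \<le> enat a + enat b" using 1 2 by (rule add_mono)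
  finally show ?thesis by simp
qed

lemma img_bound:
  assumes EV: "E \<subseteq> V \<times> V" and deg: "\<forall>x\<in>V. finite (E``{x}) \<and> card (E``{x}) \<le> K"
    and x: "x \<in> V"
  shows "finite ((E^^n)``{x}) \<and> (E^^n)``{x} \<subseteq> V \<and> card ((E^^n)``{x}) \<le> K^n"
proof (induction n)
  case 0 then show ?case using x by simp
next
  case (Suc n)
  let ?A = "(E^^n)``{x}"
  have A_fin: "finite ?A" and A_V: "?A \<subseteq> V" and A_card: "card ?A \<le> K^n"
    using Suc.IH by (simp_all only:)
  have eq: "(E^^Suc n)``{x} = (\<Union>a\<in>?A. E``{a})"
    by (simp only: relpow.simps(2) relcomp_Image) (rule Image_eq_UN)
  have dA: "finite (E``{a}) \<and> card (E``{a}) \<le> K" if "a \<in> ?A" for a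
    using deg A_V that by blast
  have fin: "finite (\<Union>a\<in>?A. E``{a})"
    by (rule finite_UN_I[OF A_fin]) (use dA in blast)
  have sub: "(\<Union>a\<in>?A. E``{a}) \<subseteq> V" using EV by auto
  have "card (\<Union>a\<in>?A. E``{a}) \<le> (\<Sum>a\<in>?A. card (E``{a}))"
    by (rule card_UN_le[OF A_fin])
  also have "\<dots> \<le> (\<Sum>a\<in>?A. K)"
    by (rule sum_mono) (use dA in blast)
  also have "\<dots> = card ?A * K" by simp
  also have "\<dots> \<le> K^n * K" using A_card by simp
  also have "\<dots> = K^Suc n" by simp
  finally have "card (\<Union>a\<in>?A. E``{a}) \<le> K^Suc n" .
  then show ?case using eq fin sub by (simp only:)
qed

lemma ball_bound:
  assumes EV: "E \<subseteq> V \<times> V" and deg: "\<forall>x\<in>V. finite (E``{x}) \<and> card (E``{x}) \<le> K"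
    and x: "x \<in> V"
  shows "finite {y. dist E x y \<le> enat c} \<and> card {y. dist E x y \<le> enat c} \<le> (\<Sum>i\<le>c. K^i)"
proof -
  have eq: "{y. dist E x y \<le> enat c} = (\<Union>i\<in>{..c}. (E^^i)``{x})"
    by (auto simp: dist_le_iff)
  have ib: "finite ((E^^i)``{x}) \<and> card ((E^^i)``{x}) \<le> K^i" for i
    using img_bound[OF EV deg x] by blast
  have "card (\<Union>i\<in>{..c}. (E^^i)``{x}) \<le> (\<Sum>i\<le>c. card ((E^^i)``{x}))"
    by (rule card_UN_le) simp
  also have "\<dots> \<le> (\<Sum>i\<le>c. K^i)" using ib by (intro sum_mono) blast
  finally show ?thesis using eq ib by simp
qed

lemma relpow_conv: "(x,y) \<in> ((E::('a\<times>'a) set)\<inverse>)^^n \<longleftrightarrow> (y,x) \<in> E^^n"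
proof (induction n arbitrary: y)
  case 0 then show ?case by auto
next
  case (Suc n)
  show ?case
  proof
    assume "(x,y) \<in> (E\<inverse>)^^Suc n"
    then obtain z where "(x,z) \<in> (E\<inverse>)^^n" "(z,y) \<in> E\<inverse>" by auto
    then have "(z,x) \<in> E^^n" "(y,z) \<in> E" using Suc by auto
    then show "(y,x) \<in> E^^Suc n" by (intro relpow_Suc_I2)
  next
    assume "(y,x) \<in> E^^Suc n"
    then obtain z where "(y,z) \<in> E" "(z,x) \<in> E^^n" by (blast dest: relpow_Suc_D2)
    then have "(x,z) \<in> (E\<inverse>)^^n" "(z,y) \<in> E\<inverse>" using Suc by auto
    then show "(x,y) \<in> (E\<inverse>)^^Suc n" by (rule relpow_Suc_I)
  qed
qed

lemma dist_conv: "dist ((E::('a\<times>'a) set)\<inverse>) x y = dist E y x"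
  unfolding dist_def by (simp only: relpow_conv)

lemma geo_map:
  assumes g: "is_geodesic V E xs" and hV: "h ` V \<subseteq> V"
    and hE: "\<forall>a\<in>V. \<forall>b\<in>V. (a,b) \<in> E \<longrightarrow> (h a, h b) \<in> E"
    and hd: "\<forall>a\<in>V. \<forall>b\<in>V. dist E (h a) (h b) = dist E a b"
  shows "is_geodesic V E (map h xs)"
proof -
  have p: "is_dpath V E xs" and L: "enat (length xs - 1) = dist E (hd xs) (last xs)"
    using g unfolding is_geodesic_def by auto
  have ne: "xs \<noteq> []" and sV: "set xs \<subseteq> V" and ed: "\<forall>i. Suc i < length xs \<longrightarrow> (xs ! i, xs ! Suc i) \<in> E"
    using p unfolding is_dpath_def by auto
  have "is_dpath V E (map h xs)" unfolding is_dpath_def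
  proof (intro conjI allI impI)
    show "map h xs \<noteq> []" using ne by simp
    show "set (map h xs) \<subseteq> V" using sV hV by auto
    fix i assume i: "Suc i < length (map h xs)"
    then have "(xs ! i, xs ! Suc i) \<in> E" "xs!i \<in> V" "xs ! Suc i \<in> V" using ed sV by auto
    then show "(map h xs ! i, map h xs ! Suc i) \<in> E" using hE i by simp
  qed
  moreover have "hd xs \<in> V" "last xs \<in> V" using ne sV by auto
  then have "dist E (hd (map h xs)) (last (map h xs)) = dist E (hd xs) (last xs)"
    using hd ne by (simp add: hd_map last_map)
  ultimately show ?thesis unfolding is_geodesic_def using L by simp
qed


locale orb =
  fixes V :: "'a set" and E :: "('a \<times> 'a) set" and g :: "'a \<Rightarrow> 'a" and v :: 'a
    and K :: nat and M :: nat and \<delta> :: nat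
  assumes EV: "E \<subseteq> V \<times> V"
    and outdeg: "\<forall>x\<in>V. finite {w. (x,w)\<in>E} \<and> card {w. (x,w)\<in>E} = K"
    and indeg: "\<forall>x\<in>V. finite {u. (u,x)\<in>E} \<and> card {u. (u,x)\<in>E} \<le> M"
    and emb: "self_embedding V E g"
    and nell: "\<not> elliptic V g"
    and vV: "v \<in> V"
    and fin: "dist E v (g v) < \<infinity>"
    and thin: "\<forall>x y z P Q R. geodesic_triangle V E x y z P Q R \<longrightarrow> thin_triangle E \<delta> P Q R"
begin

lemma gV: "x \<in> V \<Longrightarrow> g x \<in> V"
  using emb unfolding self_embedding_def by blast

lemma gE: "x \<in> V \<Longrightarrow> y \<in> V \<Longrightarrow> (x,y) \<in> E \<longleftrightarrow> (g x, g y) \<in> E"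
  using emb unfolding self_embedding_def by blast

lemma ginj: "inj_on g V"
  using emb unfolding self_embedding_def by blast

lemma outclosed:
  assumes x: "x \<in> V" and w: "(g x, w) \<in> E"
  shows "\<exists>y\<in>V. w = g y \<and> (x,y) \<in> E"
proof -
  let ?N = "{w. (x,w)\<in>E}" and ?N' = "{w. (g x,w)\<in>E}"
  have NV: "?N \<subseteq> V" using EV by blast
  have sub: "g ` ?N \<subseteq> ?N'" using NV x gE by blast
  have inj: "inj_on g ?N" using ginj NV by (rule inj_on_subset)
  have fN: "finite ?N" "card ?N = K" using outdeg x by blast+
  have fN': "finite ?N'" "card ?N' = K" using outdeg gV[OF x] by blast+
  have "card (g ` ?N) = K" using card_image[OF inj] fN by simp
  then have "g ` ?N = ?N'" using card_subset_eq[OF fN'(1) sub] fN' by simp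
  then have "w \<in> g ` ?N" using w by simp
  then show ?thesis using NV by blast
qed

lemma relpow_g:
  assumes x: "x \<in> V" shows "(x,y) \<in> E^^n \<Longrightarrow> (g x, g y) \<in> E^^n"
proof (induction n arbitrary: y)
  case 0 then show ?case by simp
next
  case (Suc n)
  from Suc.prems obtain z where z: "(x,z) \<in> E^^n" "(z,y) \<in> E" by auto
  have "z \<in> V" "y \<in> V" using z EV relpow_in_V[OF EV z(1) x] by auto
  then have "(g z, g y) \<in> E" using gE z by blast
  moreover have "(g x, g z) \<in> E^^n" using Suc.IH z by blast
  ultimately show ?case by (rule relpow_Suc_I[rotated])
qed

lemma relpow_g_back:
  assumes x: "x \<in> V" shows "(g x, w) \<in> E^^n \<Longrightarrow> \<exists>y\<in>V. w = g y \<and> (x,y) \<in> E^^n"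
proof (induction n arbitrary: w)
  case 0 then show ?case using x by simp
next
  case (Suc n)
  from Suc.prems obtain z where z: "(g x,z) \<in> E^^n" "(z,w) \<in> E" by auto
  obtain y where y: "y \<in> V" "z = g y" "(x,y) \<in> E^^n" using Suc.IH z(1) by blast
  obtain y' where y': "y' \<in> V" "w = g y'" "(y,y') \<in> E" using outclosed[OF y(1)] z(2) y(2) by blast
  have "(x,y') \<in> E^^Suc n" using y(3) y'(3) by (rule relpow_Suc_I)
  then show ?case using y' by blast
qed

lemma iso: assumes "x \<in> V" "y \<in> V" shows "dist E (g x) (g y) = dist E x y"
proof -
  have "{n. (g x, g y) \<in> E^^n} = {n. (x,y) \<in> E^^n}"
  proof (intro set_eqI iffI; simp)
    fix n assume "(g x, g y) \<in> E^^n"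
    then obtain y' where "y' \<in> V" "g y = g y'" "(x,y') \<in> E^^n" using relpow_g_back assms by blast
    moreover then have "y' = y" using ginj assms unfolding inj_on_def by blast
    ultimately show "(x,y) \<in> E^^n" by simp
  next
    fix n assume "(x,y) \<in> E^^n"
    then show "(g x, g y) \<in> E^^n" using relpow_g assms by blast
  qed
  then show ?thesis unfolding dist_def by simp
qed

lemma gpowV: "x \<in> V \<Longrightarrow> (g^^i) x \<in> V"
  by (induction i) (auto simp: gV)

lemma iso_pow: assumes "x \<in> V" "y \<in> V" shows "dist E ((g^^i) x) ((g^^i) y) = dist E x y"
  using assms
proof (induction i)
  case 0 then show ?case by simp
next
  case (Suc i)
  have "dist E ((g^^Suc i) x) ((g^^Suc i) y) = dist E (g ((g^^i) x)) (g ((g^^i) y))" by simp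
  also have "\<dots> = dist E ((g^^i) x) ((g^^i) y)" using iso gpowV Suc.prems by blast
  finally show ?case using Suc by simp
qed

lemma gpowE: "x \<in> V \<Longrightarrow> y \<in> V \<Longrightarrow> (x,y) \<in> E \<Longrightarrow> ((g^^i) x, (g^^i) y) \<in> E"
proof (induction i)
  case 0 then show ?case by simp
next
  case (Suc i) then show ?case using gE gpowV by simp
qed

lemma geo_map_pow: "is_geodesic V E xs \<Longrightarrow> is_geodesic V E (map (g^^i) xs)"
  by (rule geo_map) (auto simp: gpowV gpowE iso_pow)

lemma orbit_inj: assumes y: "y \<in> V" shows "inj (\<lambda>k. (g^^k) y)"
proof (rule injI, rule ccontr)
  fix i j assume eq: "(g^^i) y = (g^^j) y" and ne: "i \<noteq> j"
  have "\<exists>i j. i < j \<and> (g^^i) y = (g^^j) y"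
    using eq ne by (metis linorder_neqE_nat)
  then obtain i j where ij: "i < j" "(g^^i) y = (g^^j) y" by blast
  let ?F = "(\<lambda>k. (g^^k) y) ` {i..<j}"
  have "g ` ?F = (\<lambda>k. (g^^Suc k) y) ` {i..<j}" by (auto simp: image_image)
  also have "\<dots> = ?F"
  proof
    show "(\<lambda>k. (g^^Suc k) y) ` {i..<j} \<subseteq> ?F"
    proof
      fix z assume "z \<in> (\<lambda>k. (g^^Suc k) y) ` {i..<j}"
      then obtain k where k: "k \<in> {i..<j}" "z = (g^^Suc k) y" by blast
      show "z \<in> ?F"
      proof (cases "Suc k = j")
        case True
        then have "z = (g^^j) y" using k by (simp only:)
        then have "z = (g^^i) y" using ij(2) by simp
        then show ?thesis using ij(1) by (intro image_eqI[of _ _ i]) auto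
      next
        case False
        then have "Suc k \<in> {i..<j}" using k by auto
        then show ?thesis using k(2) by (intro image_eqI[of _ _ "Suc k"]) auto
      qed
    qed
    show "?F \<subseteq> (\<lambda>k. (g^^Suc k) y) ` {i..<j}"
    proof
      fix z assume "z \<in> ?F"
      then obtain k where k: "k \<in> {i..<j}" "z = (g^^k) y" by blast
      show "z \<in> (\<lambda>k. (g^^Suc k) y) ` {i..<j}"
      proof (cases "k = i")
        case True
        obtain j' where j': "j = Suc j'" using ij(1) by (cases j) auto
        have zj: "z = (g^^j) y" using k(2) True ij(2) by simp
        have "j' \<in> {i..<j}" using ij(1) j' by auto
        then show ?thesis using zj j' by (intro image_eqI[of _ _ "j'"]) auto
      next
        case False
        then have "z = (g^^Suc (k - 1)) y" using k by simp
        moreover have "k - 1 \<in> {i..<j}" using k False by auto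
        ultimately show ?thesis by (intro image_eqI[of _ _ "k - 1"]) auto
      qed
    qed
  qed
  finally have gF: "g ` ?F = ?F" .
  have ne: "?F \<noteq> {}" and fF: "finite ?F" and sF: "?F \<subseteq> V" using ij gpowV y by auto
  have "?F \<noteq> {} \<and> finite ?F \<and> ?F \<subseteq> V \<and> g ` ?F = ?F" using gF ne fF sF by (intro conjI)
  then have "\<exists>F. F \<noteq> {} \<and> finite F \<and> F \<subseteq> V \<and> g ` F = F" by (rule exI)
  then have "elliptic V g" unfolding elliptic_def .
  then show False using nell by simp
qed

definition bo :: "nat \<Rightarrow> nat" where "bo c = (\<Sum>i\<le>c. K^i)"
definition bi :: "nat \<Rightarrow> nat" where "bi c = (\<Sum>i\<le>c. M^i)"

lemma outball: assumes x: "x \<in> V"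
  shows "finite {y. dist E x y \<le> enat c} \<and> card {y. dist E x y \<le> enat c} \<le> bo c"
proof -
  have "\<forall>x\<in>V. finite (E``{x}) \<and> card (E``{x}) \<le> K"
  proof
    fix x assume "x \<in> V"
    moreover have "E``{x} = {w. (x,w)\<in>E}" by auto
    ultimately show "finite (E``{x}) \<and> card (E``{x}) \<le> K" using outdeg by simp
  qed
  from ball_bound[OF EV this x] show ?thesis unfolding bo_def .
qed

lemma inball: assumes x: "x \<in> V"
  shows "finite {y. dist E y x \<le> enat c} \<and> card {y. dist E y x \<le> enat c} \<le> bi c"
proof -
  have EV': "E\<inverse> \<subseteq> V \<times> V" using EV by auto
  have "\<forall>x\<in>V. finite (E\<inverse>``{x}) \<and> card (E\<inverse>``{x}) \<le> M"
  proof
    fix x assume "x \<in> V"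
    moreover have "E\<inverse>``{x} = {u. (u,x)\<in>E}" by auto
    ultimately show "finite (E\<inverse>``{x}) \<and> card (E\<inverse>``{x}) \<le> M" using indeg by simp
  qed
  from ball_bound[OF EV' this x, of c]
  have "finite {y. dist (E\<inverse>) x y \<le> enat c} \<and> card {y. dist (E\<inverse>) x y \<le> enat c} \<le> bi c"
    unfolding bi_def .
  then show ?thesis by (simp only: dist_conv)
qed

lemma bo_pos: "1 \<le> bo c" unfolding bo_def
proof -
  have "(\<Sum>i\<in>{0}. K^i) \<le> (\<Sum>i\<le>c. K^i)" by (rule sum_mono2) auto
  then show "1 \<le> (\<Sum>i\<le>c. K^i)" by simp
qed

lemma bi_pos: "1 \<le> bi c" unfolding bi_def
proof -
  have "(\<Sum>i\<in>{0}. M^i) \<le> (\<Sum>i\<le>c. M^i)" by (rule sum_mono2) auto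
  then show "1 \<le> (\<Sum>i\<le>c. M^i)" by simp
qed

definition a :: "nat \<Rightarrow> nat" where "a n = the_enat (dist E v ((g^^n) v))"

lemma a1: "dist E v (g v) = enat (a 1)"
proof -
  have "dist E v (g v) \<noteq> \<infinity>" using fin by simp
  then obtain m where m: "dist E v (g v) = enat m" by (rule enat_fin_obtain)
  then show ?thesis unfolding a_def by simp
qed

lemma a_bound: "dist E v ((g^^n) v) \<le> enat (n * a 1)"
proof (induction n)
  case 0 then show ?case by (simp add: dist_refl)
next
  case (Suc n)
  have e: "(g^^Suc n) v = (g^^n) (g v)" by (simp add: funpow_swap1)
  have "dist E ((g^^n) v) ((g^^n) (g v)) = dist E v (g v)" by (rule iso_pow[OF vV gV[OF vV]])
  then have "dist E ((g^^n) v) ((g^^Suc n) v) \<le> enat (a 1)" using a1 e by simp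
  then have "dist E v ((g^^Suc n) v) \<le> enat (n * a 1 + a 1)" by (rule dist_tri_nat[OF Suc.IH])
  then show ?case by (simp add: add.commute)
qed

lemma a_eq: "dist E v ((g^^n) v) = enat (a n)"
proof -
  obtain m where "dist E v ((g^^n) v) = enat m" by (rule enat_le_obtain[OF a_bound])
  then show ?thesis unfolding a_def by simp
qed

lemma a_lin: "a n \<le> n * a 1"
  using a_bound[of n] a_eq[of n] by simp

lemma a_shift: "dist E ((g^^i) v) ((g^^(i+n)) v) = enat (a n)"
proof -
  have "(g^^(i+n)) v = (g^^i) ((g^^n) v)" by (simp add: funpow_add)
  then have "dist E ((g^^i) v) ((g^^(i+n)) v) = dist E ((g^^i) v) ((g^^i) ((g^^n) v))" by simp
  also have "\<dots> = dist E v ((g^^n) v)" by (rule iso_pow[OF vV gpowV[OF vV]])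
  finally show ?thesis using a_eq by simp
qed

lemma a_sub: "a (p+q) \<le> a p + a q"
proof -
  have "dist E v ((g^^p) v) \<le> enat (a p)" using a_eq by simp
  moreover have "dist E ((g^^p) v) ((g^^(p+q)) v) \<le> enat (a q)" using a_shift by simp
  ultimately have "dist E v ((g^^(p+q)) v) \<le> enat (a p + a q)" by (rule dist_tri_nat)
  then show ?thesis using a_eq[of "p+q"] by simp
qed

lemma a_div: "a (k*n + r) \<le> k * a n + a r"
proof (induction k)
  case 0 then show ?case by simp
next
  case (Suc k)
  have "a (Suc k * n + r) = a (n + (k*n + r))" by (simp add: add.assoc)
  also have "\<dots> \<le> a n + a (k*n+r)" by (rule a_sub)
  also have "\<dots> \<le> a n + (k * a n + a r)" using Suc by simp
  finally show ?case by simp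
qed

lemma a_tendsto: "\<exists>N0. \<forall>n\<ge>N0. T < a n"
proof -
  let ?S = "{n. a n \<le> T}"
  let ?B = "{y. dist E v y \<le> enat T}"
  have fB: "finite ?B" using outball[OF vV] by blast
  have "?S \<subseteq> (\<lambda>k. (g^^k) v) -` ?B" using a_eq by auto
  moreover have "finite ((\<lambda>k. (g^^k) v) -` ?B)" by (rule finite_vimageI[OF fB orbit_inj[OF vV]])
  ultimately have "finite ?S" by (rule finite_subset)
  then obtain N0 where "\<forall>n\<in>?S. n < N0" using finite_nat_set_iff_bounded by blast
  then have "\<forall>n\<ge>N0. T < a n" by (meson mem_Collect_eq not_le not_less)
  then show ?thesis by blast
qed

lemma nb:
  assumes al: "\<alpha> \<in> V" and fp: "dist E \<alpha> p = enat fp" and pq: "dist E p q \<le> enat c"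
    and fq: "dist E \<alpha> q = enat fq"
  shows "fp \<le> fq + \<delta> + bi (\<delta> + c)"
proof -
  have pV: "p \<in> V" using dist_fin_in_V[OF EV _ al] fp by simp
  have qV: "q \<in> V" using dist_fin_in_V[OF EV _ al] fq by simp
  obtain cp where cp: "dist E p q = enat cp" "cp \<le> c" by (rule enat_le_obtain[OF pq])
  obtain Gp where Gp: "is_geodesic V E Gp" "hd Gp = \<alpha>" "last Gp = p" "length Gp = Suc fp"
    using geo_exists[OF EV al fp] by blast
  obtain Gpq where Gpq: "is_geodesic V E Gpq" "hd Gpq = p" "last Gpq = q" "length Gpq = Suc cp"
    using geo_exists[OF EV pV cp(1)] by blast
  obtain Gq where Gq: "is_geodesic V E Gq" "hd Gq = \<alpha>" "last Gq = q" "length Gq = Suc fq"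
    using geo_exists[OF EV al fq] by blast
  have "geodesic_triangle V E \<alpha> p q Gp Gpq Gq"
    unfolding geodesic_triangle_def using Gp Gpq Gq by auto
  then have "thin_triangle E \<delta> Gp Gpq Gq" using thin by blast
  then have tt: "set Gp \<subseteq> out_ball E \<delta> (set Gq) \<union> in_ball E \<delta> (set Gpq)"
    unfolding thin_triangle_def using Gp Gpq Gq by auto
  let ?I = "{i. fq + \<delta> < i \<and> i \<le> fp}"
  let ?B = "{y. dist E y q \<le> enat (\<delta> + c)}"
  have map: "Gp ! i \<in> ?B" if i: "i \<in> ?I" for i
  proof -
    have il: "i < length Gp" using i Gp by auto
    have di: "dist E \<alpha> (Gp!i) = enat i" using geo_pos[OF Gp(1) il] Gp by simp
    have mem: "Gp ! i \<in> set Gp" using il by simp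
    show ?thesis
    proof (cases "Gp ! i \<in> out_ball E \<delta> (set Gq)")
      case True
      then obtain s where s: "s \<in> set Gq" "dist E s (Gp!i) \<le> enat \<delta>" unfolding out_ball_def by blast
      obtain k where k: "k < length Gq" "Gq ! k = s" using set_nth_ex[OF s(1)] by blast
      have "dist E \<alpha> s = enat k" using geo_pos[OF Gq(1) k(1)] Gq k by simp
      then have "dist E \<alpha> s \<le> enat k" by simp
      then have "dist E \<alpha> (Gp!i) \<le> enat (k + \<delta>)" using s(2) by (rule dist_tri_nat)
      then have "i \<le> k + \<delta>" using di by simp
      then show ?thesis using i k Gq by auto
    next
      case False
      then have "Gp ! i \<in> in_ball E \<delta> (set Gpq)" using tt mem by blast
      then obtain w where w: "w \<in> set Gpq" "dist E (Gp!i) w \<le> enat \<delta>" unfolding in_ball_def by blast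
      obtain k where k: "k < length Gpq" "Gpq ! k = w" using set_nth_ex[OF w(1)] by blast
      have "dist E w q = enat (length Gpq - 1 - k)" using geo_pos[OF Gpq(1) k(1)] Gpq k by simp
      then have "dist E w q \<le> enat c" using cp Gpq by simp
      then have "dist E (Gp!i) q \<le> enat (\<delta> + c)" by (rule dist_tri_nat[OF w(2)])
      then show ?thesis by simp
    qed
  qed
  have inj: "inj_on (\<lambda>i. Gp ! i) ?I"
  proof (rule inj_onI)
    fix i j assume i: "i \<in> ?I" and j: "j \<in> ?I" and eq: "Gp ! i = Gp ! j"
    have il: "i < length Gp" and jl: "j < length Gp" using i j Gp(4) by auto
    have 1: "dist E \<alpha> (Gp!i) = enat i" using geo_pos[OF Gp(1) il] Gp(2) by simp
    have 2: "dist E \<alpha> (Gp!j) = enat j" using geo_pos[OF Gp(1) jl] Gp(2) by simp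
    have "enat i = dist E \<alpha> (Gp!i)" using 1 by (rule sym)
    also have "\<dots> = dist E \<alpha> (Gp!j)" using eq by (rule arg_cong)
    also have "\<dots> = enat j" by (rule 2)
    finally show "i = j" by (simp only: enat.inject)
  qed
  have fB: "finite ?B" and cB: "card ?B \<le> bi (\<delta> + c)" using inball[OF qV] by blast+
  have "card ?I \<le> card ?B" by (rule card_inj_on_le[OF inj _ fB]) (use map in blast)
  moreover have "?I = {fq + \<delta> + 1..fp}" by auto
  ultimately have "fp + 1 - (fq + \<delta> + 1) \<le> bi (\<delta> + c)" using cB by simp
  then show ?thesis by linarith
qed

lemma thin_use:
  assumes t: "thin_triangle E d A B C"
    and m: "(P,Q,R) \<in> {(A, B, C), (A, C, B), (B, A, C), (B, C, A), (C, A, B), (C, B, A)}"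
    and c1: "hd P = hd Q \<or> hd P = last Q" and c2: "last P = hd R \<or> last P = last R"
  shows "set P \<subseteq> out_ball E d (set Q) \<union> in_ball E d (set R)"
proof -
  have "\<forall>(P, Q, R) \<in> {(A, B, C), (A, C, B), (B, A, C), (B, C, A), (C, A, B), (C, B, A)}.
        (hd P = hd Q \<or> hd P = last Q) \<and> (last P = hd R \<or> last P = last R) \<longrightarrow>
        set P \<subseteq> out_ball E d (set Q) \<union> in_ball E d (set R)"
    using t unfolding thin_triangle_def .
  from bspec[OF this m] have "(hd P = hd Q \<or> hd P = last Q) \<and> (last P = hd R \<or> last P = last R) \<longrightarrow>
        set P \<subseteq> out_ball E d (set Q) \<union> in_ball E d (set R)" by (simp only: prod.case)
  then show ?thesis using c1 c2 by blast
qed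

lemma geo_setV: "is_geodesic V E xs \<Longrightarrow> set xs \<subseteq> V"
  unfolding is_geodesic_def is_dpath_def by blast

lemma geo_ne: "is_geodesic V E xs \<Longrightarrow> xs \<noteq> []"
  unfolding is_geodesic_def is_dpath_def by blast

lemma core:
  assumes A: "\<forall>j\<le>J. a j \<le> A"
  shows "J + 1 \<le> (2*A + 3*\<delta> + bi (\<delta>+\<delta>) + 2) * (bo \<delta> * bi \<delta>)"
proof -
  define t where "t = A + \<delta> + 1"
  define H where "H = t + A + 2*\<delta> + bi (\<delta>+\<delta>)"
  obtain N0 where N0: "\<forall>n\<ge>N0. 2*A + 3*\<delta> + 1 < a n" using a_tendsto by blast
  obtain N where N: "N0 \<le> N" "\<forall>n. N0 \<le> n \<longrightarrow> a N \<le> a n"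
    using ex_has_least_nat[of "\<lambda>n. N0 \<le> n" N0 a] by blast
  have aN: "2*A + 3*\<delta> + 1 < a N" using N0 N(1) by blast
  let ?xN = "(g^^N) v"
  have xNV: "?xN \<in> V" by (rule gpowV[OF vV])
  obtain R where R: "is_geodesic V E R" "hd R = v" "last R = ?xN" "length R = Suc (a N)"
    using geo_exists[OF EV vV a_eq[of N]] by blast
  have tl: "t < length R" using R(4) aN unfolding t_def by simp
  define y where "y = R ! t"
  have yV: "y \<in> V" using geo_setV[OF R(1)] tl unfolding y_def by auto
  define T where "T r = {u. \<exists>d. dist E r d \<le> enat \<delta> \<and> dist E u d \<le> enat \<delta>}" for r
  define I where "I = {i. i \<le> H \<and> i < length R}"
  define S where "S = (\<Union>i\<in>I. T (R ! i))"
  have Tb: "finite (T r) \<and> card (T r) \<le> bo \<delta> * bi \<delta>" if r: "r \<in> V" for r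
  proof -
    let ?Bo = "{d. dist E r d \<le> enat \<delta>}"
    have eq: "T r = (\<Union>d\<in>?Bo. {u. dist E u d \<le> enat \<delta>})" unfolding T_def by blast
    have BoV: "?Bo \<subseteq> V"
    proof
      fix d assume "d \<in> ?Bo"
      then have "dist E r d \<le> enat \<delta>" by simp
      then obtain m where "dist E r d = enat m" by (rule enat_le_obtain)
      then have "dist E r d \<noteq> \<infinity>" by simp
      then show "d \<in> V" by (rule dist_fin_in_V[OF EV _ r])
    qed
    have fBo: "finite ?Bo" and cBo: "card ?Bo \<le> bo \<delta>" using outball[OF r] by blast+
    have fi: "finite {u. dist E u d \<le> enat \<delta>} \<and> card {u. dist E u d \<le> enat \<delta>} \<le> bi \<delta>" if "d \<in> ?Bo" for d
      using inball BoV that by blast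
    have "finite (\<Union>d\<in>?Bo. {u. dist E u d \<le> enat \<delta>})"
      by (rule finite_UN_I[OF fBo]) (use fi in blast)
    moreover have "card (\<Union>d\<in>?Bo. {u. dist E u d \<le> enat \<delta>}) \<le> bo \<delta> * bi \<delta>"
    proof -
      have "card (\<Union>d\<in>?Bo. {u. dist E u d \<le> enat \<delta>}) \<le> (\<Sum>d\<in>?Bo. card {u. dist E u d \<le> enat \<delta>})"
        by (rule card_UN_le[OF fBo])
      also have "\<dots> \<le> (\<Sum>d\<in>?Bo. bi \<delta>)"
        by (rule sum_mono) (use fi in blast)
      also have "\<dots> = card ?Bo * bi \<delta>" by simp
      also have "\<dots> \<le> bo \<delta> * bi \<delta>" using cBo by (rule mult_right_mono) simp
      finally show ?thesis .
    qed
    ultimately show ?thesis using eq by simp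
  qed
  have fI: "finite I" and cI: "card I \<le> H + 1"
  proof -
    have "I \<subseteq> {..H}" unfolding I_def by auto
    then show "finite I" "card I \<le> H + 1" using card_mono[of "{..H}" I] finite_subset by auto
  qed
  have RiV: "R ! i \<in> V" if "i \<in> I" for i
    using geo_setV[OF R(1)] that unfolding I_def by auto
  have fS: "finite S" unfolding S_def
    by (rule finite_UN_I[OF fI]) (use Tb RiV in blast)
  have "card S \<le> (\<Sum>i\<in>I. card (T (R ! i)))" unfolding S_def by (rule card_UN_le[OF fI])
  also have "\<dots> \<le> (\<Sum>i\<in>I. bo \<delta> * bi \<delta>)" by (rule sum_mono) (use Tb RiV in blast)
  also have "\<dots> = card I * (bo \<delta> * bi \<delta>)" by simp
  also have "\<dots> \<le> (H + 1) * (bo \<delta> * bi \<delta>)" using cI by (rule mult_right_mono) simp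
  finally have cS: "card S \<le> (H + 1) * (bo \<delta> * bi \<delta>)" .
  have main: "(g^^j) y \<in> S" if j: "j \<le> J" for j
  proof -
    let ?u = "(g^^j) y" and ?xj = "(g^^j) v" and ?z = "(g^^(N+j)) v"
    have aj: "a j \<le> A" using A j by blast
    define R' where "R' = map (g^^j) R"
    have R'g: "is_geodesic V E R'" unfolding R'_def by (rule geo_map_pow[OF R(1)])
    have Rne: "R \<noteq> []" by (rule geo_ne[OF R(1)])
    have zeq: "(g^^j) ((g^^N) v) = ?z" by (simp only: add.commute[of N j] funpow_add comp_apply)
    have R'hd: "hd R' = ?xj" unfolding R'_def using Rne R(2) by (simp add: hd_map)
    have R'last: "last R' = ?z" unfolding R'_def using Rne R(3) zeq by (simp add: last_map)
    have R'len: "length R' = Suc (a N)" unfolding R'_def using R(4) by simp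
    have R't: "R' ! t = ?u" unfolding R'_def y_def using tl by simp
    have tl': "t < length R'" using tl R(4) R'len by simp
    have hu1: "dist E ?xj ?u = enat t" using geo_pos[OF R'g tl'] R'hd R't by simp
    have hu2: "dist E ?u ?z = enat (a N - t)" using geo_pos[OF R'g tl'] R'last R't R'len by simp
    have umem: "?u \<in> set R'" using tl' R't nth_mem by metis
    obtain S1 where S1: "is_geodesic V E S1" "hd S1 = v" "last S1 = ?xj" "length S1 = Suc (a j)"
      using geo_exists[OF EV vV a_eq[of j]] by blast
    have dS2: "dist E ?xN ?z = enat (a j)" by (rule a_shift)
    obtain S2 where S2: "is_geodesic V E S2" "hd S2 = ?xN" "last S2 = ?z" "length S2 = Suc (a j)"
      using geo_exists[OF EV xNV dS2] by blast
    obtain D where D: "is_geodesic V E D" "hd D = v" "last D = ?z" "length D = Suc (a (N+j))"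
      using geo_exists[OF EV vV a_eq[of "N+j"]] by blast
    have "dist E v ?xj \<le> enat (a j)" using a_eq by simp
    moreover have "dist E ?xj ?u \<le> enat t" using hu1 by simp
    ultimately have "dist E v ?u \<le> enat (a j + t)" by (rule dist_tri_nat)
    then obtain fu where fu: "dist E v ?u = enat fu" "fu \<le> a j + t" by (rule enat_le_obtain)
    have "dist E v ?z \<le> dist E v ?u + dist E ?u ?z" by (rule dist_tri)
    then have "a (N+j) \<le> fu + (a N - t)" using fu(1) hu2 a_eq[of "N+j"] by simp
    moreover have "a N \<le> a (N+j)" using N by simp
    ultimately have tfu: "t \<le> fu" using tl R(4) by simp
    have "geodesic_triangle V E v ?xj ?z S1 R' D"
      unfolding geodesic_triangle_def using S1 R'g R'hd R'last D by auto
    then have "thin_triangle E \<delta> S1 R' D" using thin by blast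
    then have ta: "set R' \<subseteq> out_ball E \<delta> (set S1) \<union> in_ball E \<delta> (set D)"
      by (rule thin_use) (simp_all add: R'hd S1(3) R'last D(3))
    have "?u \<notin> out_ball E \<delta> (set S1)"
    proof
      assume "?u \<in> out_ball E \<delta> (set S1)"
      then obtain s where s: "s \<in> set S1" "dist E s ?u \<le> enat \<delta>" unfolding out_ball_def by blast
      obtain k where k: "k < length S1" "S1 ! k = s" using set_nth_ex[OF s(1)] by blast
      have "dist E v s = enat k" using geo_pos[OF S1(1) k(1)] S1(2) k(2) by simp
      then have "dist E v s \<le> enat k" by simp
      then have "dist E v ?u \<le> enat (k + \<delta>)" using s(2) by (rule dist_tri_nat)
      then have "fu \<le> k + \<delta>" using fu(1) by simp
      then show False using k(1) S1(4) aj tfu unfolding t_def by simp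
    qed
    then have "?u \<in> in_ball E \<delta> (set D)" using ta umem by blast
    then obtain d where d: "d \<in> set D" "dist E ?u d \<le> enat \<delta>" unfolding in_ball_def by blast
    have "geodesic_triangle V E v ?xN ?z R S2 D"
      unfolding geodesic_triangle_def using S2 R D by auto
    then have "thin_triangle E \<delta> R S2 D" using thin by blast
    then have tb: "set D \<subseteq> out_ball E \<delta> (set R) \<union> in_ball E \<delta> (set S2)"
      by (rule thin_use) (simp_all add: R(2) D(2) S2(3) D(3))
    have "d \<notin> in_ball E \<delta> (set S2)"
    proof
      assume "d \<in> in_ball E \<delta> (set S2)"
      then obtain s where s: "s \<in> set S2" "dist E d s \<le> enat \<delta>" unfolding in_ball_def by blast
      obtain k where k: "k < length S2" "S2 ! k = s" using set_nth_ex[OF s(1)] by blast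
      have "dist E s ?z = enat (length S2 - 1 - k)" using geo_pos[OF S2(1) k(1)] S2(3) k(2) by simp
      then have "dist E s ?z \<le> enat (a j)" using S2(4) by simp
      then have "dist E d ?z \<le> enat (\<delta> + a j)" by (rule dist_tri_nat[OF s(2)])
      then have "dist E ?u ?z \<le> enat (\<delta> + (\<delta> + a j))" by (rule dist_tri_nat[OF d(2)])
      then have "a N - t \<le> \<delta> + (\<delta> + a j)" using hu2 by simp
      then show False using aN aj unfolding t_def by simp
    qed
    then have "d \<in> out_ball E \<delta> (set R)" using tb d(1) by blast
    then obtain r where r: "r \<in> set R" "dist E r d \<le> enat \<delta>" unfolding out_ball_def by blast
    obtain i where i: "i < length R" "R ! i = r" using set_nth_ex[OF r(1)] by blast
    have ri: "dist E v r = enat i" using geo_pos[OF R(1) i(1)] R(2) i(2) by simp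
    have "dist E v ?u \<le> enat fu" using fu by simp
    then have "dist E v d \<le> enat (fu + \<delta>)" using d(2) by (rule dist_tri_nat)
    then obtain fd where fd: "dist E v d = enat fd" "fd \<le> fu + \<delta>" by (rule enat_le_obtain)
    have "i \<le> fd + \<delta> + bi (\<delta> + \<delta>)" by (rule nb[OF vV ri r(2) fd(1)])
    then have "i \<le> H" using fd(2) fu(2) aj unfolding H_def by simp
    then have iI: "i \<in> I" unfolding I_def using i(1) by simp
    have "?u \<in> T (R ! i)" unfolding T_def using r(2) d(2) i(2) by blast
    then show ?thesis unfolding S_def using iI by blast
  qed
  have inj: "inj_on (\<lambda>j. (g^^j) y) {..J}" using orbit_inj[OF yV] by (rule inj_on_subset) simp
  have "card {..J} \<le> card S" by (rule card_inj_on_le[OF inj _ fS]) (use main in blast)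
  then have "J + 1 \<le> (H + 1) * (bo \<delta> * bi \<delta>)" using cS by simp
  then show ?thesis unfolding H_def t_def by simp
qed

lemma lin_lower: "n \<le> 2 * (bo \<delta> * bi \<delta>) * a n"
proof (rule ccontr)
  define \<beta> where "\<beta> = bo \<delta> * bi \<delta>"
  define W where "W = 3*\<delta> + bi (\<delta>+\<delta>) + 2"
  define m where "m = a 1"
  assume "\<not> n \<le> 2 * (bo \<delta> * bi \<delta>) * a n"
  then have lt: "2 * \<beta> * a n < n" unfolding \<beta>_def by simp
  then have npos: "0 < n" by simp
  have le: "2 * \<beta> * a n \<le> n - 1" using lt by simp
  define q where "q = (2*m*n + W) * \<beta>"
  define J where "J = q * n"
  define A where "A = q * a n + m * n"
  have "\<forall>j\<le>J. a j \<le> A"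
  proof (intro allI impI)
    fix j assume j: "j \<le> J"
    have jd: "j = (j div n) * n + j mod n" by simp
    have "j div n \<le> q"
    proof -
      have "j div n \<le> J div n" using j by (rule div_le_mono)
      also have "J div n = q" unfolding J_def using npos by simp
      finally show ?thesis .
    qed
    have "a j = a ((j div n) * n + j mod n)" using jd by simp
    also have "\<dots> \<le> (j div n) * a n + a (j mod n)" by (rule a_div)
    also have "\<dots> \<le> q * a n + a (j mod n)" using \<open>j div n \<le> q\<close> by (simp add: mult_right_mono)
    also have "a (j mod n) \<le> (j mod n) * m" unfolding m_def by (rule a_lin)
    also have "(j mod n) * m \<le> n * m" using npos by (simp add: mult_right_mono)
    finally show "a j \<le> A" unfolding A_def by (simp add: mult.commute)
  qed
  then have c0: "J + 1 \<le> (2*A + 3*\<delta> + bi (\<delta>+\<delta>) + 2) * (bo \<delta> * bi \<delta>)" by (rule core)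
  have c: "J + 1 \<le> (2*A + W) * \<beta>" using c0 by (simp only: W_def \<beta>_def add.assoc)
  have e: "(2*A + W) * \<beta> = q * (2 * \<beta> * a n) + q"
    unfolding A_def q_def by (simp add: algebra_simps)
  have "q * (2 * \<beta> * a n) \<le> q * (n - 1)" using le by (rule mult_le_mono2)
  then have "(2*A + W) * \<beta> \<le> q * (n - 1) + q" using e by simp
  also have "q * (n - 1) + q = q * n" using npos by (cases n) simp_all
  finally have "J + 1 \<le> J" using c unfolding J_def by simp
  then show False by simp
qed

lemma final:
  "\<exists>\<gamma>::real. \<exists>c::real. \<gamma> \<ge> 1 \<and> c \<ge> 0 \<and>
    (\<forall>i j::nat. i \<le> j \<longrightarrow> (\<exists>n::nat. dist E ((g ^^ i) v) ((g ^^ j) v) = enat n \<and>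
        real (j - i) / \<gamma> - c \<le> real n \<and> real n \<le> \<gamma> * real (j - i) + c))"
proof -
  define \<beta> where "\<beta> = bo \<delta> * bi \<delta>"
  have b1: "1 \<le> \<beta>" unfolding \<beta>_def using bo_pos bi_pos by (simp add: one_le_mult_iff)
  define \<gamma> where "\<gamma> = real (max (2*\<beta>) (a 1))"
  have g1: "1 \<le> \<gamma>" unfolding \<gamma>_def using b1 by simp
  have g2: "real (2*\<beta>) \<le> \<gamma>" "real (a 1) \<le> \<gamma>" unfolding \<gamma>_def by simp_all
  have "\<forall>i j::nat. i \<le> j \<longrightarrow> (\<exists>n::nat. dist E ((g ^^ i) v) ((g ^^ j) v) = enat n \<and>
        real (j - i) / \<gamma> - 0 \<le> real n \<and> real n \<le> \<gamma> * real (j - i) + 0)"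
  proof (intro allI impI)
    fix i j :: nat assume ij: "i \<le> j"
    let ?k = "j - i"
    have "dist E ((g ^^ i) v) ((g ^^ (i + ?k)) v) = enat (a ?k)" by (rule a_shift)
    then have d: "dist E ((g ^^ i) v) ((g ^^ j) v) = enat (a ?k)" using ij by simp
    have l1: "?k \<le> 2 * \<beta> * a ?k" unfolding \<beta>_def by (rule lin_lower)
    then have "real ?k \<le> real (2*\<beta>) * real (a ?k)" by (simp only: of_nat_mult[symmetric] of_nat_le_iff)
    also have "\<dots> \<le> \<gamma> * real (a ?k)" using g2(1) by (rule mult_right_mono) simp
    finally have "real ?k \<le> \<gamma> * real (a ?k)" .
    then have lo: "real ?k / \<gamma> \<le> real (a ?k)" using g1 by (simp add: divide_le_eq mult.commute)
    have "a ?k \<le> ?k * a 1" by (rule a_lin)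
    then have "real (a ?k) \<le> real ?k * real (a 1)" by (simp only: of_nat_mult[symmetric] of_nat_le_iff)
    also have "\<dots> \<le> real ?k * \<gamma>" using g2(2) by (rule mult_left_mono) simp
    finally have up: "real (a ?k) \<le> \<gamma> * real ?k" by (simp add: mult.commute)
    show "\<exists>n::nat. dist E ((g ^^ i) v) ((g ^^ j) v) = enat n \<and>
        real (j - i) / \<gamma> - 0 \<le> real n \<and> real n \<le> \<gamma> * real (j - i) + 0"
      using d lo up by auto
  qed
  then show ?thesis using g1 by (intro exI[of _ \<gamma>] exI[of _ 0]) simp
qed

end

theorem proposition3p3:
  fixes V :: "'a set" and E :: "('a \<times> 'a) set" and g :: "'a \<Rightarrow> 'a" and v :: 'a
  assumes "E \<subseteq> V \<times> V"
    and "rooted V E" and "hyperbolic_digraph V E"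
    and "constant_out_degree V E" and "bounded_in_degree V E"
    and "self_embedding V E g" and "\<not> elliptic V g"
    and "v \<in> V" and "dist E v (g v) < \<infinity>"
  shows "\<exists>\<gamma>::real. \<exists>c::real. \<gamma> \<ge> 1 \<and> c \<ge> 0 \<and>
    (\<forall>i j::nat. i \<le> j \<longrightarrow> (\<exists>n::nat. dist E ((g ^^ i) v) ((g ^^ j) v) = enat n \<and>
        real (j - i) / \<gamma> - c \<le> real n \<and> real n \<le> \<gamma> * real (j - i) + c))"
proof -
  obtain K where K: "\<forall>x\<in>V. finite {w. (x,w)\<in>E} \<and> card {w. (x,w)\<in>E} = K"
    using assms(4) unfolding constant_out_degree_def by blast
  obtain M where M: "\<forall>x\<in>V. finite {u. (u,x)\<in>E} \<and> card {u. (u,x)\<in>E} \<le> M"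
    using assms(5) unfolding bounded_in_degree_def by blast
  obtain \<delta> where d: "\<forall>x y z P Q R. geodesic_triangle V E x y z P Q R \<longrightarrow> thin_triangle E \<delta> P Q R"
    using assms(3) unfolding hyperbolic_digraph_def by blast
  interpret orb V E g v K M \<delta>
    by (rule orb.intro) (use assms K M d in auto)
  show ?thesis by (rule final)
qed

end
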